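(* Let $n \geq 2$ and $m\geq 2$ be integers, let $\mathcal{V}=\mathcal{V}_1\otimes \dots \otimes \mathcal{V}_m$ be a tensor product of vector spaces over a field $\mathbb{F}$, let $E=\{x_a: a \in[n] \}$ be a multiset of product tensors in $\mathcal{V}$, with $x_a=x_{a,1}\otimes\dots\otimes x_{a,m}$, and for each $j \in [m]$ let $d_j=\dim\operatorname{span} \{ x_{a,j}: a \in [n]\}$. If $n \leq \sum_{j=1}^m (d_j-1)+1$, then $E$ splits.
   Context: $[n]=\{1,\dots,n\}$. A product tensor is a non-zero tensor $z_1\otimes\dots\otimes z_m$, $z_j\in\mathcal{V}_j$. A multiset of non-zero vectors $\{v_1,\dots,v_n\}$ ($n\ge2$) splits if there is a sub-multiset $S$ with $1\le |S|\le n-1$ such that $\operatorname{span}\{v_1,\dots,v_n\}=\operatorname{span}(S)\oplus\operatorname{span}(S^c)$, where $S^c$ is the complementary sub-multiset. *)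

theory Defs
  imports Complex_Main "HOL-Library.Function_Algebras"
begin

text \<open>Vector spaces are modelled as spaces of functions \<open>'i \<Rightarrow> 'f\<close> over a field \<open>'f\<close>
  with pointwise operations; the scalar multiplication is \<open>fscale\<close>.\<close>

definition fscale :: "'f::field \<Rightarrow> ('i \<Rightarrow> 'f) \<Rightarrow> ('i \<Rightarrow> 'f)" where
  "fscale c v = (\<lambda>x. c * v x)"

lemma vector_space_fscale: "vector_space (fscale :: 'f::field \<Rightarrow> ('i \<Rightarrow> 'f) \<Rightarrow> ('i \<Rightarrow> 'f))"
  by unfold_locales (auto simp: fscale_def fun_eq_iff algebra_simps)

abbreviation fspan :: "('i \<Rightarrow> 'f::field) set \<Rightarrow> ('i \<Rightarrow> 'f) set" where
  "fspan \<equiv> module.span fscale"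

abbreviation fdim :: "('i \<Rightarrow> 'f::field) set \<Rightarrow> nat" where
  "fdim \<equiv> vector_space.dim fscale"

text \<open>Tensor product \<open>z 0 \<otimes> \<dots> \<otimes> z (m-1)\<close> of vectors \<open>z j :: 'i \<Rightarrow> 'f\<close>, realised as the
  function on index tuples \<open>\<kappa> :: nat \<Rightarrow> 'i\<close> given by \<open>\<Prod>j<m. z j (\<kappa> j)\<close>.\<close>

definition tensor :: "nat \<Rightarrow> (nat \<Rightarrow> 'i \<Rightarrow> 'f::field) \<Rightarrow> ((nat \<Rightarrow> 'i) \<Rightarrow> 'f)" where
  "tensor m z = (\<lambda>\<kappa>. \<Prod>j<m. z j (\<kappa> j))"

text \<open>The multiset \<open>{v 0, \<dots>, v (n-1)}\<close> splits: a sub-multiset is given by a set of indices.\<close>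

definition splits :: "nat \<Rightarrow> (nat \<Rightarrow> ('k \<Rightarrow> 'f::field)) \<Rightarrow> bool" where
  "splits n v \<longleftrightarrow> (\<exists>A \<subseteq> {..<n}. 1 \<le> card A \<and> card A \<le> n - 1 \<and>
      fspan (v ` {..<n}) = {u + w | u w. u \<in> fspan (v ` A) \<and> w \<in> fspan (v ` ({..<n} - A))} \<and>
      fspan (v ` A) \<inter> fspan (v ` ({..<n} - A)) = {0})"

end

theory Submission
  imports Defs
begin

interpretation fv: vector_space "fscale :: 'f::field \<Rightarrow> ('i \<Rightarrow> 'f) \<Rightarrow> ('i \<Rightarrow> 'f)"
  by (rule vector_space_fscale)

lemma fscale_apply: "fscale c v x = c * v x"
  by (simp add: fscale_def)

lemma sum_fun_apply: "(\<Sum>a\<in>S. f a) x = (\<Sum>a\<in>S. f a x)"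
  by (induct S rule: infinite_finite_induct) auto

lemma module_fscale: "module (fscale :: 'f::field \<Rightarrow> ('i \<Rightarrow> 'f) \<Rightarrow> ('i \<Rightarrow> 'f))"
  using vector_space_fscale module_iff_vector_space by blast

lemma hom_map_span:
  assumes "module_hom (fscale :: 'f::field \<Rightarrow> ('i \<Rightarrow> 'f) \<Rightarrow> _) (fscale :: 'f \<Rightarrow> ('k \<Rightarrow> 'f) \<Rightarrow> _) f"
    and "w \<in> fspan S" and "f ` S \<subseteq> fspan T"
  shows "f w \<in> fspan T"
proof -
  have "f w \<in> f ` fspan S" using assms(2) by blast
  also have "\<dots> = fspan (f ` S)" using module_hom.span_image[OF assms(1)] by simp
  also have "\<dots> \<subseteq> fspan T" using assms(3) fv.span_mono fv.span_span by metis
  finally show ?thesis .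
qed

lemma dim_le:
  fixes V W :: "('i \<Rightarrow> 'f::field) set"
  assumes "finite W" "V \<subseteq> fspan W"
  shows "fdim V \<le> fdim W"
proof -
  obtain C where C: "C \<subseteq> W" "fv.independent C" "W \<subseteq> fspan C" "card C = fdim W"
    using fv.basis_exists by blast
  have "V \<subseteq> fspan C" using assms(2) C(3) fv.span_mono fv.span_span by blast
  moreover have "finite C" using C(1) assms(1) finite_subset by blast
  ultimately show ?thesis using fv.dim_le_card C(4) by metis
qed

lemma dim_subs:
  fixes S T :: "('i \<Rightarrow> 'f::field) set"
  assumes "finite T" "S \<subseteq> T"
  shows "fdim S \<le> fdim T"
  using dim_le[OF assms(1)] assms(2) fv.span_superset by blast

lemma indep_card_le:
  fixes B V :: "('i \<Rightarrow> 'f::field) set"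
  assumes "fv.independent B" "B \<subseteq> fspan V" "finite V"
  shows "finite B \<and> card B \<le> fdim V"
proof -
  obtain C where C: "C \<subseteq> V" "fv.independent C" "V \<subseteq> fspan C" "card C = fdim V"
    using fv.basis_exists by blast
  have fC: "finite C" using C(1) assms(3) finite_subset by blast
  have "B \<subseteq> fspan C" using assms(2) C(3) fv.span_mono fv.span_span by blast
  then show ?thesis using fv.independent_span_bound[OF fC assms(1)] C(4) by simp
qed

lemma dim_single:
  fixes v :: "'i \<Rightarrow> 'f::field"
  assumes "v \<noteq> 0" shows "fdim {v} = 1"
  using fv.dim_eq_card_independent[of "{v}"] assms by simp

lemma dim_pos:
  fixes S :: "('i \<Rightarrow> 'f::field) set"
  assumes "finite S" "v \<in> S" "v \<noteq> 0" shows "fdim S \<ge> 1"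
  using dim_subs[OF assms(1), of "{v}"] dim_single[OF assms(3)] assms(2) by simp

lemma dim_Un_le:
  fixes G R :: "('i \<Rightarrow> 'f::field) set"
  assumes "finite G" "finite R"
  shows "fdim (G \<union> R) \<le> card G + fdim R"
proof -
  obtain C where C: "C \<subseteq> R" "fv.independent C" "R \<subseteq> fspan C" "card C = fdim R"
    using fv.basis_exists by blast
  have fC: "finite C" using C(1) assms(2) finite_subset by blast
  have "G \<union> R \<subseteq> fspan (G \<union> C)"
    using C(3) fv.span_mono[of C "G \<union> C"] fv.span_superset[of "G \<union> C"] by blast
  then have "fdim (G \<union> R) \<le> card (G \<union> C)" using fv.dim_le_card assms fC by blast
  also have "\<dots> \<le> card G + card C" by (rule card_Un_le)
  finally show ?thesis using C(4) by simp
qed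

lemma dim_direct:
  fixes S T :: "('i \<Rightarrow> 'f::field) set"
  assumes "finite S" "finite T" "fspan S \<inter> fspan T = {0}"
  shows "fdim S + fdim T \<le> fdim (S \<union> T)"
proof -
  obtain C where C: "C \<subseteq> S" "fv.independent C" "S \<subseteq> fspan C" "card C = fdim S"
    using fv.basis_exists by blast
  obtain D where D: "D \<subseteq> T" "fv.independent D" "T \<subseteq> fspan D" "card D = fdim T"
    using fv.basis_exists by blast
  have fC: "finite C" using C(1) assms(1) finite_subset by blast
  have fD: "finite D" using D(1) assms(2) finite_subset by blast
  have disj: "C \<inter> D = {}"
  proof (rule ccontr)
    assume "C \<inter> D \<noteq> {}"
    then obtain u where u: "u \<in> C" "u \<in> D" by blast
    then have "u \<in> fspan S \<inter> fspan T" using C(1) D(1) fv.span_base by blast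
    then have "u = 0" using assms(3) by blast
    then show False using u C(2) fv.dependent_zero by blast
  qed
  have ind: "fv.independent (C \<union> D)"
  proof (rule fv.independent_if_scalars_zero)
    show "finite (C \<union> D)" using fC fD by simp
  next
    fix f :: "_ \<Rightarrow> 'f" and x
    assume sum0: "(\<Sum>x\<in>C \<union> D. fscale (f x) x) = 0" and x: "x \<in> C \<union> D"
    have "(\<Sum>x\<in>C \<union> D. fscale (f x) x) = (\<Sum>x\<in>C. fscale (f x) x) + (\<Sum>x\<in>D. fscale (f x) x)"
      using sum.union_disjoint[OF fC fD disj] by simp
    then have eq: "(\<Sum>x\<in>C. fscale (f x) x) = - (\<Sum>x\<in>D. fscale (f x) x)"
      using sum0 by (simp add: eq_neg_iff_add_eq_0)
    have "(\<Sum>x\<in>C. fscale (f x) x) \<in> fspan S"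
      using C(1) by (intro fv.span_sum fv.span_scale fv.span_base) auto
    moreover have "(\<Sum>x\<in>C. fscale (f x) x) \<in> fspan T"
      unfolding eq using D(1) by (intro fv.span_neg fv.span_sum fv.span_scale fv.span_base) auto
    ultimately have c0: "(\<Sum>x\<in>C. fscale (f x) x) = 0" using assms(3) by blast
    then have d0: "(\<Sum>x\<in>D. fscale (f x) x) = 0" using eq by simp
    show "f x = 0"
    proof (cases "x \<in> C")
      case True
      then show ?thesis using fv.independentD[OF C(2) fC subset_refl c0] by blast
    next
      case False
      then have "x \<in> D" using x by blast
      then show ?thesis using fv.independentD[OF D(2) fD subset_refl d0] by blast
    qed
  qed
  have "C \<union> D \<subseteq> fspan (S \<union> T)"
    using C(1) D(1) fv.span_superset by blast
  then have "card (C \<union> D) \<le> fdim (S \<union> T)"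
    using indep_card_le[OF ind] assms by blast
  then show ?thesis using card_Un_disjoint[OF fC fD disj] C(4) D(4) by simp
qed

definition pt :: "('i \<Rightarrow> 'f::field) \<Rightarrow> ((nat \<Rightarrow> 'i) \<Rightarrow> 'f) \<Rightarrow> ((nat \<Rightarrow> 'i) \<Rightarrow> 'f)" where
  "pt y z = (\<lambda>\<kappa>. y (\<kappa> 0) * z (\<lambda>j. \<kappa> (Suc j)))"

definition rowp :: "'i \<Rightarrow> ((nat \<Rightarrow> 'i) \<Rightarrow> 'f::field) \<Rightarrow> ((nat \<Rightarrow> 'i) \<Rightarrow> 'f)" where
  "rowp p w = (\<lambda>q. w (case_nat p q))"

definition colq :: "(nat \<Rightarrow> 'i) \<Rightarrow> ((nat \<Rightarrow> 'i) \<Rightarrow> 'f::field) \<Rightarrow> ('i \<Rightarrow> 'f)" where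
  "colq q w = (\<lambda>p. w (case_nat p q))"

lemma pt_apply: "pt y z (case_nat p q) = y p * z q"
  by (simp add: pt_def)

lemma case_nat_split: "case_nat (\<kappa> 0) (\<lambda>j. \<kappa> (Suc j)) = \<kappa>"
  by (rule ext) (simp split: nat.split)

lemma fun_eq_pt: "(\<And>p q. w (case_nat p q) = w' (case_nat p q)) \<Longrightarrow> w = w'"
  by (metis case_nat_split ext)

lemma rowp_pt: "rowp p (pt y z) = fscale (y p) z"
  by (simp add: rowp_def pt_apply fscale_def)

lemma colq_pt: "colq q (pt y z) = fscale (z q) y"
  by (simp add: colq_def pt_apply fscale_def mult.commute)

lemma hom_rowp: "module_hom fscale fscale (rowp p :: ((nat \<Rightarrow> 'i) \<Rightarrow> 'f::field) \<Rightarrow> _)"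
  unfolding module_hom_iff using module_fscale
  by (auto simp: rowp_def fscale_def)

lemma hom_colq: "module_hom fscale fscale (colq q :: ((nat \<Rightarrow> 'i) \<Rightarrow> 'f::field) \<Rightarrow> _)"
  unfolding module_hom_iff
  by (auto simp: colq_def fscale_def module_fscale)

lemma pt_add2: "pt y (z1 + z2) = pt y z1 + pt y z2"
  by (rule ext) (simp add: pt_def algebra_simps)
lemma pt_add1: "pt (y1 + y2) z = pt y1 z + pt y2 z"
  by (rule ext) (simp add: pt_def algebra_simps)
lemma pt_scale2: "pt y (fscale c z) = fscale c (pt y z)"
  by (rule ext) (simp add: pt_def fscale_def algebra_simps)
lemma pt_scale1: "pt (fscale c y) z = fscale c (pt y z)"
  by (rule ext) (simp add: pt_def fscale_def algebra_simps)
lemma pt_zero2[simp]: "pt y 0 = 0"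
  by (rule ext) (simp add: pt_def)
lemma pt_zero1[simp]: "pt 0 z = 0"
  by (rule ext) (simp add: pt_def)
lemma pt_sum2: "pt y (\<Sum>a\<in>S. g a) = (\<Sum>a\<in>S. pt y (g a))"
  by (rule ext) (simp add: pt_def sum_fun_apply sum_distrib_left sum_distrib_right)
lemma pt_sum1: "pt (\<Sum>a\<in>S. g a) z = (\<Sum>a\<in>S. pt (g a) z)"
  by (rule ext) (simp add: pt_def sum_fun_apply sum_distrib_left sum_distrib_right)

lemma pt_nz: "pt y z \<noteq> 0 \<Longrightarrow> y \<noteq> 0 \<and> z \<noteq> 0"
  by auto

definition conn :: "(nat \<Rightarrow> ('k \<Rightarrow> 'f::field)) \<Rightarrow> nat set \<Rightarrow> bool" where
  "conn v A \<longleftrightarrow> (\<forall>S\<subseteq>A. S \<noteq> {} \<longrightarrow> S \<noteq> A \<longrightarrow> fspan (v ` S) \<inter> fspan (v ` (A - S)) \<noteq> {0})"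

lemma conn_elem:
  fixes v :: "nat \<Rightarrow> ('k \<Rightarrow> 'f::field)"
  assumes "conn v A" "e \<in> A" "A \<noteq> {e}"
  shows "v e \<in> fspan (v ` (A - {e}))"
proof -
  have "{e} \<subseteq> A" "{e} \<noteq> {}" "{e} \<noteq> A" using assms by auto
  then have "fspan (v ` {e}) \<inter> fspan (v ` (A - {e})) \<noteq> {0}"
    using assms(1) unfolding conn_def by blast
  moreover have "0 \<in> fspan (v ` {e}) \<inter> fspan (v ` (A - {e}))" using fv.span_zero by blast
  ultimately obtain w where w: "w \<in> fspan {v e}" "w \<in> fspan (v ` (A - {e}))" "w \<noteq> 0" by auto
  then obtain c where c: "w = fscale c (v e)" using fv.span_singleton by blast
  with w have "c \<noteq> 0" by auto
  then have "v e = fscale (inverse c) w" using c by (simp add: fscale_def fun_eq_iff)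
  then show ?thesis using w(2) fv.span_scale by metis
qed

lemma int_zero_merge:
  fixes v :: "nat \<Rightarrow> ('k \<Rightarrow> 'f::field)"
  assumes "B \<subseteq> S" "S \<subseteq> A"
    and h1: "fspan (v ` B) \<inter> fspan (v ` (S - B)) = {0}"
    and h2: "fspan (v ` S) \<inter> fspan (v ` (A - S)) = {0}"
  shows "fspan (v ` B) \<inter> fspan (v ` (A - B)) = {0}"
proof -
  { fix u assume u: "u \<in> fspan (v ` B)" "u \<in> fspan (v ` (A - B))"
    have "v ` (A - B) = v ` (S - B) \<union> v ` (A - S)" using assms(1,2) by blast
    then have "u \<in> fspan (v ` (S - B) \<union> v ` (A - S))" using u(2) by simp
    then have "u \<in> {x + y | x y. x \<in> fspan (v ` (S - B)) \<and> y \<in> fspan (v ` (A - S))}"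
      by (simp only: fv.span_Un)
    then obtain s t where st: "u = s + t" "s \<in> fspan (v ` (S - B))" "t \<in> fspan (v ` (A - S))"
      by blast
    have "u \<in> fspan (v ` S)" using u(1) fv.span_mono[of "v ` B" "v ` S"] assms(1) by blast
    moreover have "s \<in> fspan (v ` S)" using st(2) fv.span_mono[of "v ` (S - B)" "v ` S"] by blast
    ultimately have "t \<in> fspan (v ` S)" using st(1) fv.span_diff by (metis add_diff_cancel_left')
    then have "t = 0" using h2 st(3) by blast
    then have "u = 0" using h1 u(1) st by auto }
  then show ?thesis using fv.span_zero by blast
qed

lemma not_conn:
  fixes v :: "nat \<Rightarrow> ('k \<Rightarrow> 'f::field)"
  assumes "\<not> conn v A"
  shows "\<exists>S\<subseteq>A. S \<noteq> {} \<and> S \<noteq> A \<and> fspan (v ` S) \<inter> fspan (v ` (A - S)) = {0}"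
  using assms unfolding conn_def by blast

lemma decomp:
  fixes v :: "nat \<Rightarrow> ('k \<Rightarrow> 'f::field)"
  assumes "finite A"
  shows "\<exists>P. finite P \<and> \<Union>P = A \<and> (\<forall>B\<in>P. B \<noteq> {} \<and> conn v B \<and> fspan (v ` B) \<inter> fspan (v ` (A - B)) = {0})
    \<and> (\<forall>B\<in>P. \<forall>B'\<in>P. B \<noteq> B' \<longrightarrow> B \<inter> B' = {}) \<and> (\<Sum>B\<in>P. fdim (v ` B)) \<le> fdim (v ` A)"
  using assms
proof (induction "card A" arbitrary: A rule: less_induct)
  case less
  show ?case
  proof (cases "A = {}")
    case True
    then show ?thesis by (intro exI[of _ "{}"]) auto
  next
    case ne: False
    show ?thesis
    proof (cases "conn v A")
      case True
      have "fspan (v ` (A - A)) = {0}" using fv.span_empty by simp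
      then have "fspan (v ` A) \<inter> fspan (v ` (A - A)) = {0}" using fv.span_zero[of "v ` A"] by blast
      then show ?thesis
      proof (intro exI[of _ "{A}"] conjI)
        show "finite {A}" by simp
        show "\<Union>{A} = A" by simp
        show "\<forall>B\<in>{A}. \<forall>B'\<in>{A}. B \<noteq> B' \<longrightarrow> B \<inter> B' = {}" by simp
        show "(\<Sum>B\<in>{A}. fdim (v ` B)) \<le> fdim (v ` A)" by simp
      qed (use ne True in blast)
    next
      case False
      obtain S where S: "S \<subseteq> A" "S \<noteq> {}" "S \<noteq> A" "fspan (v ` S) \<inter> fspan (v ` (A - S)) = {0}"
        using not_conn[OF False] by auto
      have fS: "finite S" using S(1) less.prems finite_subset by blast
      have fT: "finite (A - S)" using less.prems by simp
      have "S \<subset> A" using S(1,3) by blast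
      then have cS: "card S < card A" using less.prems psubset_card_mono by blast
      have "A - S \<subset> A" using S(1,2) by blast
      then have cT: "card (A - S) < card A" using less.prems psubset_card_mono by blast
      obtain P1 where P1: "finite P1" "\<Union>P1 = S" "\<forall>B\<in>P1. B \<noteq> {} \<and> conn v B \<and> fspan (v ` B) \<inter> fspan (v ` (S - B)) = {0}"
        "\<forall>B\<in>P1. \<forall>B'\<in>P1. B \<noteq> B' \<longrightarrow> B \<inter> B' = {}" "(\<Sum>B\<in>P1. fdim (v ` B)) \<le> fdim (v ` S)"
        using less.hyps[OF cS fS] by (elim exE conjE) (rule that)
      obtain P2 where P2: "finite P2" "\<Union>P2 = A - S" "\<forall>B\<in>P2. B \<noteq> {} \<and> conn v B \<and> fspan (v ` B) \<inter> fspan (v ` ((A - S) - B)) = {0}"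
        "\<forall>B\<in>P2. \<forall>B'\<in>P2. B \<noteq> B' \<longrightarrow> B \<inter> B' = {}" "(\<Sum>B\<in>P2. fdim (v ` B)) \<le> fdim (v ` (A - S))"
        using less.hyps[OF cT fT] by (elim exE conjE) (rule that)
      have S2: "fspan (v ` (A - S)) \<inter> fspan (v ` (A - (A - S))) = {0}"
        using S(1,4) by (simp add: Int_commute double_diff)
      have disjP: "P1 \<inter> P2 = {}"
      proof (rule ccontr)
        assume "P1 \<inter> P2 \<noteq> {}"
        then obtain B where "B \<in> P1" "B \<in> P2" by blast
        then have "B \<subseteq> S" "B \<subseteq> A - S" "B \<noteq> {}" using P1(2,3) P2(2) by blast+
        then show False by blast
      qed
      have "(\<Sum>B\<in>P1 \<union> P2. fdim (v ` B)) = (\<Sum>B\<in>P1. fdim (v ` B)) + (\<Sum>B\<in>P2. fdim (v ` B))"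
        using sum.union_disjoint[OF P1(1) P2(1) disjP] by simp
      also have "\<dots> \<le> fdim (v ` S) + fdim (v ` (A - S))" using P1(5) P2(5) by simp
      also have "\<dots> \<le> fdim (v ` S \<union> v ` (A - S))"
        using dim_direct fS fT S(4) by blast
      also have "v ` S \<union> v ` (A - S) = v ` A" using S(1) by blast
      finally have dimle: "(\<Sum>B\<in>P1 \<union> P2. fdim (v ` B)) \<le> fdim (v ` A)" .
      show ?thesis
      proof (intro exI[of _ "P1 \<union> P2"] conjI)
        show "finite (P1 \<union> P2)" using P1(1) P2(1) by simp
        show "\<Union> (P1 \<union> P2) = A" using P1(2) P2(2) S(1) by blast
        show "\<forall>B\<in>P1 \<union> P2. B \<noteq> {} \<and> conn v B \<and> fspan (v ` B) \<inter> fspan (v ` (A - B)) = {0}"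
        proof
          fix B assume "B \<in> P1 \<union> P2"
          then show "B \<noteq> {} \<and> conn v B \<and> fspan (v ` B) \<inter> fspan (v ` (A - B)) = {0}"
          proof
            assume B: "B \<in> P1"
            then have "B \<subseteq> S" using P1(2) by blast
            moreover have "B \<noteq> {} \<and> conn v B \<and> fspan (v ` B) \<inter> fspan (v ` (S - B)) = {0}"
              using B P1(3) by blast
            ultimately show ?thesis using int_zero_merge[OF _ S(1) _ S(4)] by blast
          next
            assume B: "B \<in> P2"
            then have "B \<subseteq> A - S" using P2(2) by blast
            moreover have "A - (A - S) = S" using S(1) by blast
            moreover have "B \<noteq> {} \<and> conn v B \<and> fspan (v ` B) \<inter> fspan (v ` ((A - S) - B)) = {0}"
              using B P2(3) by blast
            ultimately show ?thesis using int_zero_merge[of B "A - S" A v] S2 by simp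
          qed
        qed
        show "\<forall>B\<in>P1 \<union> P2. \<forall>B'\<in>P1 \<union> P2. B \<noteq> B' \<longrightarrow> B \<inter> B' = {}"
        proof (intro ballI impI)
          fix B B' assume BB: "B \<in> P1 \<union> P2" "B' \<in> P1 \<union> P2" "B \<noteq> B'"
          show "B \<inter> B' = {}"
          proof (cases "B \<in> P1")
            case True
            show ?thesis
            proof (cases "B' \<in> P1")
              case True
              then show ?thesis using \<open>B \<in> P1\<close> P1(4) BB(3) by blast
            next
              case False
              then have "B' \<subseteq> A - S" using BB(2) P2(2) by blast
              moreover have "B \<subseteq> S" using \<open>B \<in> P1\<close> P1(2) by blast
              ultimately show ?thesis by blast
            qed
          next
            case False
            then have B2: "B \<subseteq> A - S" "B \<in> P2" using BB(1) P2(2) by blast+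
            show ?thesis
            proof (cases "B' \<in> P1")
              case True
              then have "B' \<subseteq> S" using P1(2) by blast
              then show ?thesis using B2 by blast
            next
              case False
              then have "B' \<in> P2" using BB(2) by blast
              then show ?thesis using B2 P2(4) BB(3) by blast
            qed
          qed
        qed
        show "(\<Sum>B\<in>P1 \<union> P2. fdim (v ` B)) \<le> fdim (v ` A)" by (rule dimle)
      qed
    qed
  qed
qed

lemma span_partition_sum:
  fixes v :: "nat \<Rightarrow> ('k \<Rightarrow> 'f::field)"
  assumes "finite P" "u \<in> fspan (v ` \<Union>P)"
  shows "\<exists>w. (\<forall>B\<in>P. w B \<in> fspan (v ` B)) \<and> u = (\<Sum>B\<in>P. w B)"
  using assms
proof (induction P arbitrary: u rule: finite_induct)
  case empty
  then show ?case using fv.span_empty by simp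
next
  case (insert B P)
  have "v ` \<Union>(insert B P) = v ` B \<union> v ` \<Union>P" by auto
  then have "u \<in> fspan (v ` B \<union> v ` \<Union>P)" using insert.prems by simp
  then have "u \<in> {x + y | x y. x \<in> fspan (v ` B) \<and> y \<in> fspan (v ` \<Union>P)}"
    by (simp only: fv.span_Un)
  then obtain a b where ab: "u = a + b" "a \<in> fspan (v ` B)" "b \<in> fspan (v ` \<Union>P)"
    by blast
  obtain w where w: "\<forall>B\<in>P. w B \<in> fspan (v ` B)" "b = (\<Sum>B\<in>P. w B)"
    using insert.IH[OF ab(3)] by blast
  have e1: "(\<Sum>x\<in>P. (w(B := a)) x) = (\<Sum>x\<in>P. w x)"
    by (rule sum.cong) (use insert.hyps in auto)
  have "(\<Sum>x\<in>insert B P. (w(B := a)) x) = a + (\<Sum>x\<in>P. w x)"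
    using insert.hyps sum.insert[of P B "w(B := a)"] e1 by simp
  then show ?case
    using insert.hyps ab w
    by (intro exI[of _ "w(B := a)"]) auto
qed

lemma basis_idx:
  fixes y :: "nat \<Rightarrow> ('k \<Rightarrow> 'f::field)"
  assumes "finite B"
  shows "\<exists>T\<subseteq>B. inj_on y T \<and> fv.independent (y ` T) \<and> y ` B \<subseteq> fspan (y ` T) \<and> card T = fdim (y ` B)"
proof -
  obtain C where C: "C \<subseteq> y ` B" "fv.independent C" "y ` B \<subseteq> fspan C" "card C = fdim (y ` B)"
    using fv.basis_exists by blast
  define T where "T = inv_into B y ` C"
  have TB: "T \<subseteq> B" using C(1) by (auto simp: T_def inv_into_into)
  have yT: "y ` T = C" using C(1) unfolding T_def by (simp add: image_inv_into_cancel)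
  have inj: "inj_on y T"
  proof (rule inj_onI)
    fix a b assume ab: "a \<in> T" "b \<in> T" "y a = y b"
    then obtain c1 c2 where c: "c1 \<in> C" "c2 \<in> C" "a = inv_into B y c1" "b = inv_into B y c2"
      unfolding T_def by blast
    have "y a = c1" using c(1,3) C(1) f_inv_into_f by (metis subsetD)
    moreover have "y b = c2" using c(2,4) C(1) f_inv_into_f by (metis subsetD)
    ultimately show "a = b" using ab(3) c(3,4) by simp
  qed
  have "card T = card C" using card_image[OF inj] yT by simp
  then show ?thesis using TB inj yT C by auto
qed

lemma span_idx:
  fixes y :: "nat \<Rightarrow> ('k \<Rightarrow> 'f::field)"
  assumes "finite T" "inj_on y T" "u \<in> fspan (y ` T)"
  shows "\<exists>c. u = (\<Sum>s\<in>T. fscale (c s) (y s))"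
proof -
  have "u \<in> range (\<lambda>f. \<Sum>v\<in>y ` T. fscale (f v) v)"
    using assms(3) fv.span_finite[of "y ` T"] assms(1) by simp
  then obtain f where f: "u = (\<Sum>v\<in>y ` T. fscale (f v) v)" by blast
  also have "\<dots> = (\<Sum>s\<in>T. fscale (f (y s)) (y s))"
    using sum.reindex[OF assms(2)] by simp
  finally have eq: "u = (\<Sum>s\<in>T. fscale (f (y s)) (y s))" .
  show ?thesis by (rule exI[of _ "\<lambda>s. f (y s)"]) (use eq in simp)
qed

lemma pt_indep_zero:
  fixes y :: "nat \<Rightarrow> ('i \<Rightarrow> 'f::field)" and g :: "nat \<Rightarrow> (nat \<Rightarrow> 'i) \<Rightarrow> 'f"
  assumes "finite T0" "inj_on y T0" "fv.independent (y ` T0)" "(\<Sum>s\<in>T0. pt (y s) (g s)) = 0" "s \<in> T0"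
  shows "g s = 0"
proof (rule ext)
  fix q
  have "(\<Sum>s\<in>T0. fscale (g s q) (y s)) = 0"
  proof (rule ext)
    fix p
    have "(\<Sum>s\<in>T0. pt (y s) (g s)) (case_nat p q) = 0" using assms(4) by simp
    then show "(\<Sum>s\<in>T0. fscale (g s q) (y s)) p = 0 p"
      by (simp add: sum_fun_apply pt_apply fscale_apply mult.commute)
  qed
  moreover have "(\<Sum>v\<in>y ` T0. fscale (g (inv_into T0 y v) q) v) = (\<Sum>s\<in>T0. fscale (g (inv_into T0 y (y s)) q) (y s))"
    using sum.reindex[OF assms(2)] by simp
  moreover have "\<dots> = (\<Sum>s\<in>T0. fscale (g s q) (y s))"
    by (rule sum.cong) (simp_all add: assms(2))
  ultimately have "(\<Sum>v\<in>y ` T0. fscale (g (inv_into T0 y v) q) v) = 0" by simp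
  then have "g (inv_into T0 y (y s)) q = 0"
    using fv.independentD[OF assms(3) finite_imageI[OF assms(1)] subset_refl, of "\<lambda>v. g (inv_into T0 y v) q" "y s"] assms(5) by blast
  then show "g s q = 0 q" using inv_into_f_f[OF assms(2,5)] by simp
qed

lemma fscale_sum: "fscale c (\<Sum>a\<in>S. f a) = (\<Sum>a\<in>S. fscale c (f a))"
  by (rule ext) (simp add: fscale_apply sum_fun_apply sum_distrib_left)

lemma rep_R:
  fixes y :: "nat \<Rightarrow> ('i \<Rightarrow> 'f::field)" and z :: "nat \<Rightarrow> ((nat \<Rightarrow> 'i) \<Rightarrow> 'f)"
  assumes "finite T" "inj_on y T" "y ` B \<subseteq> fspan (y ` T)"
    and "w \<in> fspan ((\<lambda>a. pt (y a) (z a)) ` B)"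
  shows "\<exists>v. w = (\<Sum>s\<in>T. pt (y s) (v s)) \<and> (\<forall>s. v s \<in> fspan (z ` B))"
  using assms(4)
proof (induction rule: fv.span_induct)
  case base
  show ?case
    unfolding fv.subspace_def
  proof (intro conjI ballI allI)
    show "0 \<in> {w. \<exists>v. w = (\<Sum>s\<in>T. pt (y s) (v s)) \<and> (\<forall>s. v s \<in> fspan (z ` B))}"
      using fv.span_zero by (intro CollectI exI[of _ "\<lambda>s. 0"]) simp
  next
    fix w1 w2 assume w: "w1 \<in> {w. \<exists>v. w = (\<Sum>s\<in>T. pt (y s) (v s)) \<and> (\<forall>s. v s \<in> fspan (z ` B))}"
      "w2 \<in> {w. \<exists>v. w = (\<Sum>s\<in>T. pt (y s) (v s)) \<and> (\<forall>s. v s \<in> fspan (z ` B))}"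
    then obtain v1 v2 where v: "w1 = (\<Sum>s\<in>T. pt (y s) (v1 s))" "\<forall>s. v1 s \<in> fspan (z ` B)"
      "w2 = (\<Sum>s\<in>T. pt (y s) (v2 s))" "\<forall>s. v2 s \<in> fspan (z ` B)" by blast
    have "w1 + w2 = (\<Sum>s\<in>T. pt (y s) (v1 s + v2 s))"
      unfolding v(1,3) pt_add2 sum.distrib ..
    moreover have "\<forall>s. v1 s + v2 s \<in> fspan (z ` B)" using v(2,4) fv.span_add by blast
    ultimately have "\<exists>v. w1 + w2 = (\<Sum>s\<in>T. pt (y s) (v s)) \<and> (\<forall>s. v s \<in> fspan (z ` B))"
      by (intro exI[of _ "\<lambda>s. v1 s + v2 s"]) simp
    then show "w1 + w2 \<in> {w. \<exists>v. w = (\<Sum>s\<in>T. pt (y s) (v s)) \<and> (\<forall>s. v s \<in> fspan (z ` B))}"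
      by (simp only: mem_Collect_eq)
  next
    fix c w1 assume w: "w1 \<in> {w. \<exists>v. w = (\<Sum>s\<in>T. pt (y s) (v s)) \<and> (\<forall>s. v s \<in> fspan (z ` B))}"
    then obtain v1 where v: "w1 = (\<Sum>s\<in>T. pt (y s) (v1 s))" "\<forall>s. v1 s \<in> fspan (z ` B)" by blast
    have "fscale c w1 = (\<Sum>s\<in>T. pt (y s) (fscale c (v1 s)))"
      unfolding v(1) fscale_sum pt_scale2 ..
    moreover have "\<forall>s. fscale c (v1 s) \<in> fspan (z ` B)" using v(2) fv.span_scale by blast
    ultimately have "\<exists>v. fscale c w1 = (\<Sum>s\<in>T. pt (y s) (v s)) \<and> (\<forall>s. v s \<in> fspan (z ` B))"
      by (intro exI[of _ "\<lambda>s. fscale c (v1 s)"]) simp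
    then show "fscale c w1 \<in> {w. \<exists>v. w = (\<Sum>s\<in>T. pt (y s) (v s)) \<and> (\<forall>s. v s \<in> fspan (z ` B))}"
      by (simp only: mem_Collect_eq)
  qed
next
  case (step x)
  then obtain a where a: "a \<in> B" "x = pt (y a) (z a)" by blast
  then have "y a \<in> fspan (y ` T)" using assms(3) by blast
  then obtain c where c: "y a = (\<Sum>s\<in>T. fscale (c s) (y s))" using span_idx[OF assms(1,2)] by blast
  have "x = (\<Sum>s\<in>T. pt (y s) (fscale (c s) (z a)))"
    unfolding a(2) c pt_sum1 pt_scale1 pt_scale2 ..
  moreover have "\<forall>s. fscale (c s) (z a) \<in> fspan (z ` B)"
    using a(1) fv.span_scale fv.span_base by blast
  ultimately show ?case by (intro exI[of _ "\<lambda>s. fscale (c s) (z a)"]) simp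
qed

lemma pt_diff2: "pt y (a - b) = pt y a - pt y b"
  by (rule ext) (simp add: pt_def algebra_simps)

lemma keyK:
  fixes y :: "nat \<Rightarrow> ('i \<Rightarrow> 'f::field)" and v :: "nat \<Rightarrow> ((nat \<Rightarrow> 'i) \<Rightarrow> 'f)"
  assumes fT: "finite T" and eq: "(\<Sum>s\<in>T. pt (y s) (v s)) = pt y0 z0"
  shows "fdim (v ` T) + fdim (y ` T) \<le> card T + 1"
proof -
  obtain T0 where T0: "T0 \<subseteq> T" "inj_on y T0" "fv.independent (y ` T0)" "y ` T \<subseteq> fspan (y ` T0)"
    "card T0 = fdim (y ` T)"
    using basis_idx[where y=y, OF fT] by (elim exE conjE) (rule that)
  have fT0: "finite T0" using T0(1) fT finite_subset by blast
  have spT: "fspan (y ` T) \<subseteq> fspan (y ` T0)"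
    using fv.span_minimal[OF T0(4) fv.subspace_span] .
  have "\<forall>t\<in>T. \<exists>c. y t = (\<Sum>s\<in>T0. fscale (c s) (y s))"
  proof
    fix t assume "t \<in> T"
    then have "y t \<in> fspan (y ` T0)" using T0(4) by blast
    then show "\<exists>c. y t = (\<Sum>s\<in>T0. fscale (c s) (y s))" using span_idx[OF fT0 T0(2)] by blast
  qed
  from bchoice[OF this] obtain \<mu> where \<mu>: "\<forall>t\<in>T. y t = (\<Sum>s\<in>T0. fscale (\<mu> t s) (y s))" by blast
  define \<mu>' where "\<mu>' t s = (if t \<in> T0 then (if s = t then 1 else 0) else \<mu> t s)" for t s
  have \<mu>': "y t = (\<Sum>s\<in>T0. fscale (\<mu>' t s) (y s))" if t: "t \<in> T" for t
  proof (cases "t \<in> T0")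
    case True
    have "(\<Sum>s\<in>T0. fscale (\<mu>' t s) (y s)) = (\<Sum>s\<in>T0. if s = t then y s else 0)"
      by (rule sum.cong) (auto simp: \<mu>'_def True fscale_def)
    also have "\<dots> = y t" using True fT0 by simp
    finally show ?thesis by simp
  next
    case False
    then show ?thesis using \<mu> t by (simp add: \<mu>'_def)
  qed
  obtain \<eta> where \<eta>: "pt y0 z0 = (\<Sum>s\<in>T0. pt (y s) (fscale (\<eta> s) z0))"
  proof (cases "z0 = 0")
    case True
    then have "pt y0 z0 = (\<Sum>s\<in>T0. pt (y s) (fscale ((\<lambda>s. 0) s) z0))"
      by simp
    then show ?thesis by (rule that)
  next
    case False
    have "\<exists>q. z0 q \<noteq> 0"
    proof (rule ccontr)
      assume "\<not> (\<exists>q. z0 q \<noteq> 0)"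
      then have "z0 = 0" by (simp add: fun_eq_iff)
      then show False using False by simp
    qed
    then obtain q where q: "z0 q \<noteq> 0" by blast
    have "fscale (z0 q) y0 = (\<Sum>s\<in>T. fscale (v s q) (y s))"
    proof (rule ext)
      fix p
      have "(\<Sum>s\<in>T. pt (y s) (v s)) (case_nat p q) = pt y0 z0 (case_nat p q)" using eq by simp
      then show "fscale (z0 q) y0 p = (\<Sum>s\<in>T. fscale (v s q) (y s)) p"
        by (simp add: sum_fun_apply pt_apply fscale_apply mult.commute)
    qed
    moreover have "(\<Sum>s\<in>T. fscale (v s q) (y s)) \<in> fspan (y ` T)"
      by (intro fv.span_sum fv.span_scale fv.span_base) auto
    ultimately have "fscale (z0 q) y0 \<in> fspan (y ` T)" by simp
    then have "fscale (inverse (z0 q)) (fscale (z0 q) y0) \<in> fspan (y ` T)"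
      by (rule fv.span_scale)
    moreover have "fscale (inverse (z0 q)) (fscale (z0 q) y0) = y0"
      using q by (simp add: fscale_def fun_eq_iff)
    ultimately have "y0 \<in> fspan (y ` T)" by simp
    then have "y0 \<in> fspan (y ` T0)" using spT by blast
    then obtain c where c: "y0 = (\<Sum>s\<in>T0. fscale (c s) (y s))" using span_idx[OF fT0 T0(2)] by blast
    have "pt y0 z0 = (\<Sum>s\<in>T0. pt (y s) (fscale (c s) z0))"
      unfolding c pt_sum1 pt_scale1 pt_scale2 ..
    then show ?thesis by (rule that)
  qed
  have "(\<Sum>t\<in>T. pt (y t) (v t)) = (\<Sum>t\<in>T. \<Sum>s\<in>T0. pt (y s) (fscale (\<mu>' t s) (v t)))"
  proof (rule sum.cong)
    fix t assume t: "t \<in> T"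
    show "pt (y t) (v t) = (\<Sum>s\<in>T0. pt (y s) (fscale (\<mu>' t s) (v t)))"
      by (subst \<mu>'[OF t]) (simp only: pt_sum1 pt_scale1 pt_scale2)
  qed simp
  also have "\<dots> = (\<Sum>s\<in>T0. \<Sum>t\<in>T. pt (y s) (fscale (\<mu>' t s) (v t)))"
    by (rule sum.swap)
  also have "\<dots> = (\<Sum>s\<in>T0. pt (y s) (\<Sum>t\<in>T. fscale (\<mu>' t s) (v t)))"
    by (simp only: pt_sum2)
  finally have L: "(\<Sum>t\<in>T. pt (y t) (v t)) = (\<Sum>s\<in>T0. pt (y s) (\<Sum>t\<in>T. fscale (\<mu>' t s) (v t)))" .
  have "(\<Sum>s\<in>T0. pt (y s) ((\<Sum>t\<in>T. fscale (\<mu>' t s) (v t)) - fscale (\<eta> s) z0)) =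
      (\<Sum>s\<in>T0. pt (y s) (\<Sum>t\<in>T. fscale (\<mu>' t s) (v t))) - (\<Sum>s\<in>T0. pt (y s) (fscale (\<eta> s) z0))"
    by (simp only: pt_diff2 sum_subtractf)
  also have "\<dots> = 0" using L eq \<eta> by simp
  finally have Z: "(\<Sum>s\<in>T0. pt (y s) ((\<Sum>t\<in>T. fscale (\<mu>' t s) (v t)) - fscale (\<eta> s) z0)) = 0" .
  define W where "W = insert z0 (v ` (T - T0))"
  have vW: "v ` T \<subseteq> fspan W"
  proof
    fix u assume "u \<in> v ` T"
    then obtain t where t: "t \<in> T" "u = v t" by blast
    show "u \<in> fspan W"
    proof (cases "t \<in> T0")
      case False
      then show ?thesis using t unfolding W_def by (intro fv.span_base) auto
    next
      case True
      have g0: "(\<Sum>t'\<in>T. fscale (\<mu>' t' t) (v t')) - fscale (\<eta> t) z0 = 0"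
        using pt_indep_zero[OF fT0 T0(2,3) Z True] .
      have split: "(\<Sum>t'\<in>T. fscale (\<mu>' t' t) (v t')) =
          (\<Sum>t'\<in>T0. fscale (\<mu>' t' t) (v t')) + (\<Sum>t'\<in>T - T0. fscale (\<mu>' t' t) (v t'))"
        using sum.subset_diff[OF T0(1) fT] by (simp add: add.commute)
      have "(\<Sum>t'\<in>T0. fscale (\<mu>' t' t) (v t')) = (\<Sum>t'\<in>T0. if t' = t then v t' else 0)"
        by (rule sum.cong) (auto simp: \<mu>'_def fscale_def)
      also have "\<dots> = v t" using True fT0 by simp
      finally have "v t = fscale (\<eta> t) z0 - (\<Sum>t'\<in>T - T0. fscale (\<mu>' t' t) (v t'))"
        using g0 split by (simp add: algebra_simps)
      moreover have "fscale (\<eta> t) z0 \<in> fspan W" unfolding W_def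
        by (intro fv.span_scale fv.span_base) auto
      moreover have "(\<Sum>t'\<in>T - T0. fscale (\<mu>' t' t) (v t')) \<in> fspan W" unfolding W_def
        by (intro fv.span_sum fv.span_scale fv.span_base) auto
      ultimately show ?thesis using t(2) fv.span_diff[of "fscale (\<eta> t) z0" W "(\<Sum>t'\<in>T - T0. fscale (\<mu>' t' t) (v t'))"] by simp
    qed
  qed
  have fW: "finite W" unfolding W_def using fT by simp
  have "fdim (v ` T) \<le> card W" using fv.dim_le_card[OF vW fW] .
  also have "\<dots> \<le> card (v ` (T - T0)) + 1" unfolding W_def using fT by (simp add: card_insert_if)
  also have "\<dots> \<le> card (T - T0) + 1" using card_image_le[of "T - T0" v] fT by simp
  also have "\<dots> = card T - card T0 + 1" using card_Diff_subset[OF fT0 T0(1)] by simp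
  finally have "fdim (v ` T) \<le> card T - card T0 + 1" .
  moreover have "card T0 \<le> card T" using card_mono[OF fT T0(1)] .
  ultimately show ?thesis using T0(5) by simp
qed

lemma lemE:
  fixes z :: "nat \<Rightarrow> ('k \<Rightarrow> 'f::field)"
  assumes fP: "finite P" and fB: "\<forall>B\<in>P. finite B" and r: "\<forall>B\<in>P. r B \<in> fspan (z ` B) \<and> r B \<noteq> 0"
  shows "fdim (z ` \<Union>P) + card P \<le> (\<Sum>B\<in>P. fdim (z ` B)) + fdim (r ` P)"
proof -
  have "\<forall>B\<in>P. \<exists>G. finite G \<and> card G + 1 = fdim (z ` B) \<and> z ` B \<subseteq> fspan (insert (r B) G)"
  proof
    fix B assume B: "B \<in> P"
    have rB: "r B \<in> fspan (z ` B)" "r B \<noteq> 0" using r B by auto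
    have "{r B} \<subseteq> insert (r B) (z ` B)" by simp
    moreover have "fv.independent {r B}" using rB(2) by simp
    ultimately obtain Bs where Bs: "{r B} \<subseteq> Bs" "Bs \<subseteq> insert (r B) (z ` B)" "fv.independent Bs"
      "insert (r B) (z ` B) \<subseteq> fspan Bs"
      by (rule fv.maximal_independent_subset_extend)
    have "card Bs = fdim (insert (r B) (z ` B))" using fv.basis_card_eq_dim[OF Bs(2,4,3)] .
    also have "\<dots> = fdim (z ` B)" using fv.span_redundant[OF rB(1)] fv.span_eq_dim by blast
    finally have cBs: "card Bs = fdim (z ` B)" .
    have fBs: "finite Bs" using Bs(2) fB B finite_subset by blast
    define G where "G = Bs - {r B}"
    have "insert (r B) G = Bs" using Bs(1) unfolding G_def by blast
    moreover have "card G + 1 = card Bs"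
    proof -
      have "0 < card Bs" using fBs Bs(1) by (auto simp: card_gt_0_iff)
      moreover have "card G = card Bs - 1" unfolding G_def using Bs(1) by (simp add: card_Diff_singleton)
      ultimately show ?thesis by simp
    qed
    moreover have "finite G" using fBs unfolding G_def by simp
    ultimately show "\<exists>G. finite G \<and> card G + 1 = fdim (z ` B) \<and> z ` B \<subseteq> fspan (insert (r B) G)"
      using Bs(4) cBs by (intro exI[of _ G]) auto
  qed
  from bchoice[OF this] obtain Gf where Gf: "\<forall>B\<in>P. finite (Gf B) \<and> card (Gf B) + 1 = fdim (z ` B) \<and>
      z ` B \<subseteq> fspan (insert (r B) (Gf B))" by (elim exE) (rule that)
  define G where "G = (\<Union>B\<in>P. Gf B)"
  have fG: "finite G" unfolding G_def using fP Gf by blast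
  have fR: "finite (r ` P)" using fP by simp
  have sub: "z ` \<Union>P \<subseteq> fspan (G \<union> r ` P)"
  proof
    fix u assume "u \<in> z ` \<Union>P"
    then obtain B a where Ba: "B \<in> P" "a \<in> B" "u = z a" by blast
    then have "u \<in> fspan (insert (r B) (Gf B))" using Gf by blast
    moreover have "insert (r B) (Gf B) \<subseteq> G \<union> r ` P" using Ba(1) unfolding G_def by blast
    ultimately show "u \<in> fspan (G \<union> r ` P)" using fv.span_mono by blast
  qed
  have "fdim (z ` \<Union>P) \<le> fdim (G \<union> r ` P)" using dim_le[OF _ sub] fG fR by simp
  also have "\<dots> \<le> card G + fdim (r ` P)" using dim_Un_le[OF fG fR] .
  also have "card G \<le> (\<Sum>B\<in>P. card (Gf B))" unfolding G_def by (rule card_UN_le[OF fP])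
  finally have "fdim (z ` \<Union>P) + card P \<le> (\<Sum>B\<in>P. card (Gf B)) + card P + fdim (r ` P)" by simp
  also have "(\<Sum>B\<in>P. card (Gf B)) + card P = (\<Sum>B\<in>P. card (Gf B) + 1)"
    by (simp only: sum.distrib) simp
  also have "\<dots> = (\<Sum>B\<in>P. fdim (z ` B))" using Gf by (intro sum.cong) auto
  finally show ?thesis .
qed

lemma sublemma:
  fixes y :: "nat \<Rightarrow> ('i \<Rightarrow> 'f::field)" and z :: "nat \<Rightarrow> ((nat \<Rightarrow> 'i) \<Rightarrow> 'f)"
  assumes fP: "finite P" and fB: "\<forall>B\<in>P. finite B"
    and disj: "\<forall>B\<in>P. \<forall>B'\<in>P. B \<noteq> B' \<longrightarrow> B \<inter> B' = {}"
    and w: "\<forall>B\<in>P. w B \<in> fspan ((\<lambda>a. pt (y a) (z a)) ` B) \<and> w B \<noteq> 0"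
    and sm: "(\<Sum>B\<in>P. w B) = pt y0 z0"
  shows "fdim (y ` \<Union>P) + fdim (z ` \<Union>P) + card P \<le> (\<Sum>B\<in>P. fdim (y ` B) + fdim (z ` B)) + 1"
proof -
  have "\<forall>B\<in>P. \<exists>T. T \<subseteq> B \<and> inj_on y T \<and> fv.independent (y ` T) \<and> y ` B \<subseteq> fspan (y ` T) \<and> card T = fdim (y ` B)"
  proof
    fix B assume "B \<in> P"
    then have "finite B" using fB by blast
    from basis_idx[where y=y, OF this]
    show "\<exists>T. T \<subseteq> B \<and> inj_on y T \<and> fv.independent (y ` T) \<and> y ` B \<subseteq> fspan (y ` T) \<and> card T = fdim (y ` B)" .
  qed
  from bchoice[OF this] obtain Tf where Tf: "\<forall>B\<in>P. Tf B \<subseteq> B \<and> inj_on y (Tf B) \<and> fv.independent (y ` Tf B)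
      \<and> y ` B \<subseteq> fspan (y ` Tf B) \<and> card (Tf B) = fdim (y ` B)" by (elim exE) (rule that)
  have fTf: "\<forall>B\<in>P. finite (Tf B)"
  proof
    fix B assume B: "B \<in> P"
    then have "Tf B \<subseteq> B" "finite B" using Tf fB by auto
    then show "finite (Tf B)" using finite_subset by blast
  qed
  have "\<forall>B\<in>P. \<exists>v. w B = (\<Sum>s\<in>Tf B. pt (y s) (v s)) \<and> (\<forall>s. v s \<in> fspan (z ` B))"
  proof
    fix B assume B: "B \<in> P"
    show "\<exists>v. w B = (\<Sum>s\<in>Tf B. pt (y s) (v s)) \<and> (\<forall>s. v s \<in> fspan (z ` B))"
    proof (rule rep_R[where T="Tf B" and y=y and B=B and w="w B" and z=z])
      show "finite (Tf B)" using fTf B by blast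
      show "inj_on y (Tf B)" using Tf B by blast
      show "y ` B \<subseteq> fspan (y ` Tf B)" using Tf B by blast
      show "w B \<in> fspan ((\<lambda>a. pt (y a) (z a)) ` B)" using w B by blast
    qed
  qed
  from bchoice[OF this] obtain V where V: "\<forall>B\<in>P. w B = (\<Sum>s\<in>Tf B. pt (y s) (V B s)) \<and> (\<forall>s. V B s \<in> fspan (z ` B))"
    by (elim exE) (rule that)
  define TT where "TT = (\<Union>B\<in>P. Tf B)"
  define vv where "vv s = V (SOME B. B \<in> P \<and> s \<in> Tf B) s" for s
  have vvB: "vv s = V B s" if "B \<in> P" "s \<in> Tf B" for B s
  proof -
    have ex: "\<exists>B. B \<in> P \<and> s \<in> Tf B" using that by blast
    define B' where "B' = (SOME B. B \<in> P \<and> s \<in> Tf B)"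
    have B': "B' \<in> P" "s \<in> Tf B'" using someI_ex[OF ex] unfolding B'_def by auto
    have "s \<in> B" "s \<in> B'" using that B' Tf by blast+
    then have "B' = B" using disj B'(1) that(1) by blast
    then show ?thesis unfolding vv_def B'_def[symmetric] by simp
  qed
  have TfB: "\<forall>B\<in>P. Tf B \<subseteq> B" using Tf by blast
  have Tcard: "\<And>B. B \<in> P \<Longrightarrow> card (Tf B) = fdim (y ` B)" using Tf by blast
  have Tsp: "\<And>B. B \<in> P \<Longrightarrow> y ` B \<subseteq> fspan (y ` Tf B)" using Tf by blast
  have Veq: "\<And>B. B \<in> P \<Longrightarrow> w B = (\<Sum>s\<in>Tf B. pt (y s) (V B s))" using V by blast
  have Vsp: "\<And>B s. B \<in> P \<Longrightarrow> V B s \<in> fspan (z ` B)" using V by blast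
  have disjT: "\<forall>B\<in>P. \<forall>B'\<in>P. B \<noteq> B' \<longrightarrow> Tf B \<inter> Tf B' = {}"
  proof (intro ballI impI)
    fix B B' assume "B \<in> P" "B' \<in> P" "B \<noteq> B'"
    then have "B \<inter> B' = {}" "Tf B \<subseteq> B" "Tf B' \<subseteq> B'" using disj TfB by auto
    then show "Tf B \<inter> Tf B' = {}" by blast
  qed
  have fTT: "finite TT" unfolding TT_def using fP fTf by (intro finite_UN_I) auto
  have "pt y0 z0 = (\<Sum>B\<in>P. w B)" using sm by simp
  also have "\<dots> = (\<Sum>B\<in>P. \<Sum>s\<in>Tf B. pt (y s) (V B s))"
    by (rule sum.cong) (simp_all add: Veq)
  also have "\<dots> = (\<Sum>B\<in>P. \<Sum>s\<in>Tf B. pt (y s) (vv s))"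
    by (intro sum.cong refl) (simp add: vvB)
  also have "\<dots> = (\<Sum>s\<in>TT. pt (y s) (vv s))" unfolding TT_def
    by (rule sum.UNION_disjoint[symmetric, OF fP fTf disjT])
  finally have eqS: "pt y0 z0 = (\<Sum>s\<in>TT. pt (y s) (vv s))" .
  have K: "fdim (vv ` TT) + fdim (y ` TT) \<le> card TT + 1" using keyK[OF fTT eqS[symmetric]] .
  have "card TT = (\<Sum>B\<in>P. card (Tf B))"
    unfolding TT_def using card_UN_disjoint[OF fP fTf disjT] .
  also have "\<dots> = (\<Sum>B\<in>P. fdim (y ` B))" by (rule sum.cong) (simp_all add: Tcard)
  finally have cTT: "card TT = (\<Sum>B\<in>P. fdim (y ` B))" .
  have "y ` \<Union>P \<subseteq> fspan (y ` TT)"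
  proof
    fix u assume "u \<in> y ` \<Union>P"
    then obtain B a where Ba: "B \<in> P" "a \<in> B" "u = y a" by blast
    then have "u \<in> fspan (y ` Tf B)" using Tsp[OF Ba(1)] by blast
    moreover have "y ` Tf B \<subseteq> y ` TT" using Ba(1) unfolding TT_def by blast
    ultimately show "u \<in> fspan (y ` TT)" using fv.span_mono by blast
  qed
  then have dY: "fdim (y ` \<Union>P) \<le> fdim (y ` TT)" using dim_le[of "y ` TT" "y ` \<Union>P"] fTT by simp
  have "\<forall>B\<in>P. \<exists>s. s \<in> Tf B \<and> vv s \<noteq> 0"
  proof (rule ballI, rule ccontr)
    fix B assume B: "B \<in> P" and "\<not> (\<exists>s. s \<in> Tf B \<and> vv s \<noteq> 0)"
    then have "\<forall>s\<in>Tf B. V B s = 0" using vvB by auto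
    then have "w B = 0" using Veq[OF B] by simp
    then show False using w B by blast
  qed
  from bchoice[OF this] obtain sB where sB: "\<forall>B\<in>P. sB B \<in> Tf B \<and> vv (sB B) \<noteq> 0" by (elim exE) (rule that)
  define r where "r B = vv (sB B)" for B
  have r: "\<forall>B\<in>P. r B \<in> fspan (z ` B) \<and> r B \<noteq> 0"
  proof
    fix B assume B: "B \<in> P"
    have "r B = V B (sB B)" unfolding r_def using vvB[OF B] sB B by blast
    then show "r B \<in> fspan (z ` B) \<and> r B \<noteq> 0" using Vsp[OF B] B sB unfolding r_def by auto
  qed
  have E: "fdim (z ` \<Union>P) + card P \<le> (\<Sum>B\<in>P. fdim (z ` B)) + fdim (r ` P)"
    using lemE[OF fP fB r] .
  have "r ` P \<subseteq> vv ` TT" unfolding r_def TT_def using sB by blast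
  then have dR: "fdim (r ` P) \<le> fdim (vv ` TT)" using dim_subs[of "vv ` TT" "r ` P"] fTT by simp
  have "(\<Sum>B\<in>P. fdim (y ` B) + fdim (z ` B)) = (\<Sum>B\<in>P. fdim (y ` B)) + (\<Sum>B\<in>P. fdim (z ` B))"
    by (rule sum.distrib)
  then show ?thesis using K cTT dY E dR by linarith
qed

lemma nz_point: "(f :: 'k \<Rightarrow> 'f::field) \<noteq> 0 \<Longrightarrow> \<exists>q. f q \<noteq> 0"
  by (rule ccontr) (simp add: fun_eq_iff)

lemma y_in_span:
  fixes y :: "nat \<Rightarrow> ('i \<Rightarrow> 'f::field)" and z :: "nat \<Rightarrow> ((nat \<Rightarrow> 'i) \<Rightarrow> 'f)"
  assumes "pt y0 z0 \<in> fspan ((\<lambda>a. pt (y a) (z a)) ` S)" "z0 \<noteq> 0"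
  shows "y0 \<in> fspan (y ` S)"
proof -
  obtain q where q: "z0 q \<noteq> 0" using nz_point[OF assms(2)] by blast
  have "colq q ` ((\<lambda>a. pt (y a) (z a)) ` S) \<subseteq> fspan (y ` S)"
  proof
    fix u assume "u \<in> colq q ` ((\<lambda>a. pt (y a) (z a)) ` S)"
    then obtain a where a: "a \<in> S" "u = colq q (pt (y a) (z a))" by blast
    then have "u = fscale (z a q) (y a)" by (simp add: colq_pt)
    then show "u \<in> fspan (y ` S)" using a(1) by (simp add: fv.span_scale fv.span_base)
  qed
  then have "colq q (pt y0 z0) \<in> fspan (y ` S)" using hom_map_span[OF hom_colq assms(1)] by blast
  then have "fscale (z0 q) y0 \<in> fspan (y ` S)" by (simp add: colq_pt)
  then have "fscale (inverse (z0 q)) (fscale (z0 q) y0) \<in> fspan (y ` S)" by (rule fv.span_scale)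
  moreover have "fscale (inverse (z0 q)) (fscale (z0 q) y0) = y0"
    using q by (simp add: fscale_def fun_eq_iff)
  ultimately show ?thesis by simp
qed

lemma z_in_span:
  fixes y :: "nat \<Rightarrow> ('i \<Rightarrow> 'f::field)" and z :: "nat \<Rightarrow> ((nat \<Rightarrow> 'i) \<Rightarrow> 'f)"
  assumes "w \<in> fspan ((\<lambda>a. pt (y a) (z a)) ` S)"
  shows "rowp p w \<in> fspan (z ` S)"
proof -
  have "rowp p ` ((\<lambda>a. pt (y a) (z a)) ` S) \<subseteq> fspan (z ` S)"
  proof
    fix u assume "u \<in> rowp p ` ((\<lambda>a. pt (y a) (z a)) ` S)"
    then obtain a where a: "a \<in> S" "u = rowp p (pt (y a) (z a))" by blast
    then have "u = fscale (y a p) (z a)" by (simp add: rowp_pt)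
    then show "u \<in> fspan (z ` S)" using a(1) by (simp add: fv.span_scale fv.span_base)
  qed
  then show ?thesis using hom_map_span[OF hom_rowp assms(1)] by blast
qed

lemma z0_in_span:
  fixes y :: "nat \<Rightarrow> ('i \<Rightarrow> 'f::field)" and z :: "nat \<Rightarrow> ((nat \<Rightarrow> 'i) \<Rightarrow> 'f)"
  assumes "pt y0 z0 \<in> fspan ((\<lambda>a. pt (y a) (z a)) ` S)" "y0 \<noteq> 0"
  shows "z0 \<in> fspan (z ` S)"
proof -
  obtain p where p: "y0 p \<noteq> 0" using nz_point[OF assms(2)] by blast
  have "fscale (y0 p) z0 \<in> fspan (z ` S)" using z_in_span[OF assms(1), of p] by (simp add: rowp_pt)
  then have "fscale (inverse (y0 p)) (fscale (y0 p) z0) \<in> fspan (z ` S)" by (rule fv.span_scale)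
  moreover have "fscale (inverse (y0 p)) (fscale (y0 p) z0) = z0"
    using p by (simp add: fscale_def fun_eq_iff)
  ultimately show ?thesis by simp
qed

lemma conn_transfer:
  fixes y :: "nat \<Rightarrow> ('i \<Rightarrow> 'f::field)" and z :: "nat \<Rightarrow> ((nat \<Rightarrow> 'i) \<Rightarrow> 'f)"
  assumes "conn (\<lambda>a. pt (y a) (z a)) A"
  shows "conn z A"
  unfolding conn_def
proof (intro allI impI)
  fix S assume S: "S \<subseteq> A" "S \<noteq> {}" "S \<noteq> A"
  show "fspan (z ` S) \<inter> fspan (z ` (A - S)) \<noteq> {0}"
  proof
    assume Z: "fspan (z ` S) \<inter> fspan (z ` (A - S)) = {0}"
    have "fspan ((\<lambda>a. pt (y a) (z a)) ` S) \<inter> fspan ((\<lambda>a. pt (y a) (z a)) ` (A - S)) \<subseteq> {0}"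
    proof
      fix w assume w: "w \<in> fspan ((\<lambda>a. pt (y a) (z a)) ` S) \<inter> fspan ((\<lambda>a. pt (y a) (z a)) ` (A - S))"
      have "\<And>p. rowp p w = 0"
      proof -
        fix p
        have "rowp p w \<in> fspan (z ` S)" using w z_in_span[where y=y and z=z and S=S and w=w and p=p] by blast
        moreover have "rowp p w \<in> fspan (z ` (A - S))" using w z_in_span[where y=y and z=z and S="A - S" and w=w and p=p] by blast
        ultimately show "rowp p w = 0" using Z by blast
      qed
      then have "w = 0"
        by (intro fun_eq_pt) (metis rowp_def zero_fun_apply)
      then show "w \<in> {0}" by simp
    qed
    then have "fspan ((\<lambda>a. pt (y a) (z a)) ` S) \<inter> fspan ((\<lambda>a. pt (y a) (z a)) ` (A - S)) = {0}"
      using fv.span_zero by blast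
    then show False using assms S unfolding conn_def by blast
  qed
qed

lemma M2:
  fixes y :: "nat \<Rightarrow> ('i \<Rightarrow> 'f::field)" and z :: "nat \<Rightarrow> ((nat \<Rightarrow> 'i) \<Rightarrow> 'f)"
  assumes "finite A" "A \<noteq> {}" "\<forall>a\<in>A. pt (y a) (z a) \<noteq> 0" "conn (\<lambda>a. pt (y a) (z a)) A"
  shows "fdim (y ` A) + fdim (z ` A) \<le> fdim ((\<lambda>a. pt (y a) (z a)) ` A) + 1"
  using assms
proof (induction "card A" arbitrary: A rule: less_induct)
  case less
  define x where "x = (\<lambda>a. pt (y a) (z a))"
  have fA: "finite A" and nz: "\<forall>a\<in>A. x a \<noteq> 0" and cA: "conn x A"
    using less.prems unfolding x_def by auto
  obtain e where e: "e \<in> A" using less.prems(2) by blast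
  have ye: "y e \<noteq> 0" and ze: "z e \<noteq> 0" using nz e unfolding x_def by auto
  show ?case
  proof (cases "A = {e}")
    case True
    have "x e \<noteq> 0" using nz e by blast
    then show ?thesis using True dim_single[OF ye] dim_single[OF ze] dim_single[of "x e"] unfolding x_def[symmetric] by simp
  next
    case False
    define A' where "A' = A - {e}"
    have fA': "finite A'" using fA unfolding A'_def by simp
    have AA': "A = insert e A'" using e unfolding A'_def by blast
    have eA': "e \<notin> A'" unfolding A'_def by blast
    have xe: "x e \<in> fspan (x ` A')" using conn_elem[OF cA e False] unfolding A'_def .
    obtain P where P: "finite P" "\<Union>P = A'"
      "\<forall>B\<in>P. B \<noteq> {} \<and> conn x B \<and> fspan (x ` B) \<inter> fspan (x ` (A' - B)) = {0}"
      "\<forall>B\<in>P. \<forall>B'\<in>P. B \<noteq> B' \<longrightarrow> B \<inter> B' = {}" "(\<Sum>B\<in>P. fdim (x ` B)) \<le> fdim (x ` A')"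
      using decomp[where v=x, OF fA'] by (elim exE conjE) (rule that)
    have xeP: "x e \<in> fspan (x ` \<Union>P)" using xe P(2) by simp
    obtain w where w: "\<forall>B\<in>P. w B \<in> fspan (x ` B)" "x e = (\<Sum>B\<in>P. w B)"
      using span_partition_sum[where v=x, OF P(1) xeP] by (elim exE conjE) (rule that)
    have BA': "\<And>B. B \<in> P \<Longrightarrow> B \<subseteq> A'" using P(2) by blast
    have fBs: "\<forall>B\<in>P. finite B" using BA' fA' finite_subset by blast
    have wnz: "\<forall>B\<in>P. w B \<noteq> 0"
    proof (rule ballI, rule notI)
      fix B assume B: "B \<in> P" and w0: "w B = 0"
      have "x e = w B + (\<Sum>B'\<in>P - {B}. w B')" using w(2) sum.remove[OF P(1) B] by simp
      then have xe2: "x e = (\<Sum>B'\<in>P - {B}. w B')" using w0 by simp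
      have "(\<Sum>B'\<in>P - {B}. w B') \<in> fspan (x ` (A' - B))"
      proof (rule fv.span_sum)
        fix B' assume B': "B' \<in> P - {B}"
        then have "B' \<subseteq> A' - B" using P(4) B BA' by blast
        then have "fspan (x ` B') \<subseteq> fspan (x ` (A' - B))" by (intro fv.span_mono) blast
        then show "w B' \<in> fspan (x ` (A' - B))" using w(1) B' by blast
      qed
      then have xe3: "x e \<in> fspan (x ` (A' - B))" using xe2 by simp
      have "A - B = insert e (A' - B)" using AA' eA' BA'[OF B] by blast
      then have "x ` (A - B) = insert (x e) (x ` (A' - B))" by simp
      then have "fspan (x ` (A - B)) = fspan (x ` (A' - B))" using fv.span_redundant[OF xe3] by simp
      then have I0: "fspan (x ` B) \<inter> fspan (x ` (A - B)) = {0}" using P(3) B by simp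
      have "B \<subseteq> A" "B \<noteq> {}" "B \<noteq> A" using BA'[OF B] P(3) B AA' eA' by auto
      then have "fspan (x ` B) \<inter> fspan (x ` (A - B)) \<noteq> {0}" using cA unfolding conn_def by blast
      then show False using I0 by simp
    qed
    have IH: "fdim (y ` B) + fdim (z ` B) \<le> fdim (x ` B) + 1" if B: "B \<in> P" for B
    proof -
      have "B \<subseteq> A'" using BA'[OF B] .
      then have "B \<subset> A" using AA' eA' by blast
      then have c: "card B < card A" using fA psubset_card_mono by blast
      have "finite B" "B \<noteq> {}" "\<forall>a\<in>B. pt (y a) (z a) \<noteq> 0" "conn (\<lambda>a. pt (y a) (z a)) B"
        using fBs B P(3) nz \<open>B \<subset> A\<close> unfolding x_def by auto
      from less.hyps[OF c this] show ?thesis unfolding x_def .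
    qed
    have wP: "\<forall>B\<in>P. w B \<in> fspan ((\<lambda>a. pt (y a) (z a)) ` B) \<and> w B \<noteq> 0"
      using w(1) wnz unfolding x_def by blast
    have S: "fdim (y ` A') + fdim (z ` A') + card P \<le> (\<Sum>B\<in>P. fdim (y ` B) + fdim (z ` B)) + 1"
      using sublemma[OF P(1) fBs P(4) wP, of "y e" "z e"] w(2) P(2) unfolding x_def by simp
    have "(\<Sum>B\<in>P. fdim (y ` B) + fdim (z ` B)) \<le> (\<Sum>B\<in>P. fdim (x ` B) + 1)"
      using IH by (intro sum_mono) auto
    also have "\<dots> = (\<Sum>B\<in>P. fdim (x ` B)) + card P" by (simp only: sum.distrib) simp
    finally have S2: "fdim (y ` A') + fdim (z ` A') \<le> fdim (x ` A') + 1" using S P(5) by linarith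
    have "x ` A = insert (x e) (x ` A')" using AA' by simp
    then have dX: "fdim (x ` A) = fdim (x ` A')" using fv.span_redundant[OF xe] fv.span_eq_dim by metis
    have xe': "pt (y e) (z e) \<in> fspan ((\<lambda>a. pt (y a) (z a)) ` A')" using xe unfolding x_def .
    have "y e \<in> fspan (y ` A')" using y_in_span[OF xe' ze] .
    then have "y ` A \<subseteq> fspan (y ` A')" using AA' fv.span_superset by blast
    then have dY: "fdim (y ` A) \<le> fdim (y ` A')" using dim_le[of "y ` A'" "y ` A"] fA' by simp
    have "z e \<in> fspan (z ` A')" using z0_in_span[OF xe' ye] .
    then have "z ` A \<subseteq> fspan (z ` A')" using AA' fv.span_superset by blast
    then have dZ: "fdim (z ` A) \<le> fdim (z ` A')" using dim_le[of "z ` A'" "z ` A"] fA' by simp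
    show ?thesis using S2 dX dY dZ unfolding x_def by linarith
  qed
qed

lemma tensor_Suc: "tensor (Suc m) z = pt (z 0) (tensor m (\<lambda>j. z (Suc j)))"
  unfolding tensor_def pt_def by (rule ext) (rule prod.lessThan_Suc_shift)

lemma claimC:
  fixes x :: "nat \<Rightarrow> nat \<Rightarrow> ('i \<Rightarrow> 'f::field)"
  assumes fA: "finite A" and neA: "A \<noteq> {}"
  shows "(\<forall>a\<in>A. tensor m (x a) \<noteq> 0) \<Longrightarrow> conn (\<lambda>a. tensor m (x a)) A \<Longrightarrow>
    (\<Sum>j<m. fdim ((\<lambda>a. x a j) ` A)) + 1 \<le> fdim ((\<lambda>a. tensor m (x a)) ` A) + m"
proof (induction m arbitrary: x)
  case 0
  have one: "(\<lambda>\<kappa>. 1) \<noteq> (0 :: (nat \<Rightarrow> 'i) \<Rightarrow> 'f)" by (simp add: fun_eq_iff)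
  have "(\<lambda>a. tensor 0 (x a)) ` A = {\<lambda>\<kappa>. 1}" using neA by (auto simp: tensor_def)
  then show ?case using dim_single[OF one] by simp
next
  case (Suc m)
  define y where "y a = x a 0" for a
  define z where "z a = tensor m (\<lambda>j. x a (Suc j))" for a
  have T: "(\<lambda>a. tensor (Suc m) (x a)) = (\<lambda>a. pt (y a) (z a))"
    by (rule ext) (simp add: tensor_Suc y_def z_def)
  have nz: "\<forall>a\<in>A. pt (y a) (z a) \<noteq> 0" using Suc.prems(1) T by metis
  have cn: "conn (\<lambda>a. pt (y a) (z a)) A" using Suc.prems(2) T by simp
  have M: "fdim (y ` A) + fdim (z ` A) \<le> fdim ((\<lambda>a. pt (y a) (z a)) ` A) + 1"
    using M2[OF fA neA nz cn] .
  have nz': "\<forall>a\<in>A. tensor m (\<lambda>j. x a (Suc j)) \<noteq> 0" using nz unfolding z_def by auto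
  have cn': "conn (\<lambda>a. tensor m (\<lambda>j. x a (Suc j))) A"
    using conn_transfer[OF cn] unfolding z_def .
  have IH: "(\<Sum>j<m. fdim ((\<lambda>a. x a (Suc j)) ` A)) + 1 \<le> fdim (z ` A) + m"
    using Suc.IH[of "\<lambda>a j. x a (Suc j)", OF nz' cn'] unfolding z_def .
  have "(\<Sum>j<Suc m. fdim ((\<lambda>a. x a j) ` A)) = fdim (y ` A) + (\<Sum>j<m. fdim ((\<lambda>a. x a (Suc j)) ` A))"
    unfolding sum.lessThan_Suc_shift y_def ..
  moreover have "(\<lambda>a. tensor (Suc m) (x a)) ` A = (\<lambda>a. pt (y a) (z a)) ` A" by (simp only: T)
  ultimately show ?case using M IH by simp
qed

lemma tensor_factor_nz:
  fixes z :: "nat \<Rightarrow> 'i \<Rightarrow> 'f::field"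
  assumes "tensor m z \<noteq> 0" "j < m"
  shows "z j \<noteq> 0"
proof
  assume z0: "z j = 0"
  have "tensor m z = 0"
  proof (rule ext)
    fix \<kappa>
    have "\<exists>i\<in>{..<m}. z i (\<kappa> i) = 0" using z0 assms(2) by (intro bexI[of _ j]) auto
    then show "tensor m z \<kappa> = 0 \<kappa>" unfolding tensor_def by (simp add: prod_zero)
  qed
  then show False using assms(1) by simp
qed

theorem corollary5p1:
  fixes n m :: nat
    and x :: "nat \<Rightarrow> nat \<Rightarrow> ('i \<Rightarrow> 'f::field)"
    and d :: "nat \<Rightarrow> nat"
  assumes "n \<ge> 2" and "m \<ge> 2"
    and "\<And>a. a < n \<Longrightarrow> tensor m (x a) \<noteq> 0"
    and "\<And>j. j < m \<Longrightarrow> d j = fdim ((\<lambda>a. x a j) ` {..<n})"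
    and "n \<le> (\<Sum>j<m. d j - 1) + 1"
  shows "splits n (\<lambda>a. tensor m (x a))"
proof (rule ccontr)
  assume ns: "\<not> splits n (\<lambda>a. tensor m (x a))"
  define v where "v a = tensor m (x a)" for a
  have cn: "conn v {..<n}"
    unfolding conn_def
  proof (intro allI impI notI)
    fix S assume S: "S \<subseteq> {..<n}" "S \<noteq> {}" "S \<noteq> {..<n}"
      and I0: "fspan (v ` S) \<inter> fspan (v ` ({..<n} - S)) = {0}"
    have fS: "finite S" using S(1) finite_subset by blast
    have c1: "1 \<le> card S" using fS S(2) by (simp add: Suc_le_eq card_gt_0_iff)
    have "S \<subset> {..<n}" using S(1,3) by blast
    then have "card S < card {..<n}" using psubset_card_mono by blast
    then have c2: "card S \<le> n - 1" by simp
    have "v ` {..<n} = v ` S \<union> v ` ({..<n} - S)" using S(1) by blast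
    then have sp: "fspan (v ` {..<n}) = {u + w |u w. u \<in> fspan (v ` S) \<and> w \<in> fspan (v ` ({..<n} - S))}"
      using fv.span_Un by simp
    have "splits n v" unfolding splits_def
      by (rule exI[of _ S], intro conjI, fact S(1), fact c1, fact c2, fact sp, fact I0)
    then show False using ns unfolding v_def by simp
  qed
  have "0 \<in> {..<n}" using assms(1) by simp
  then have ne: "{..<n} \<noteq> {}" by blast
  have nz: "\<forall>a\<in>{..<n}. tensor m (x a) \<noteq> 0" using assms(3) by simp
  have C: "(\<Sum>j<m. fdim ((\<lambda>a. x a j) ` {..<n})) + 1 \<le> fdim (v ` {..<n}) + m"
    using claimC[OF finite_lessThan ne nz] cn unfolding v_def by simp
  define e where "e = n - 1"
  have e1: "e \<in> {..<n}" using assms(1) unfolding e_def by simp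
  have "0 \<in> {..<n}" "0 \<noteq> e" using assms(1) unfolding e_def by simp_all
  then have e2: "{..<n} \<noteq> {e}" by blast
  note e = e1 e2
  have ve: "v e \<in> fspan (v ` ({..<n} - {e}))" using conn_elem[OF cn e] .
  have "{..<n} = insert e ({..<n} - {e})" using e(1) by blast
  then have "v ` {..<n} = insert (v e) (v ` ({..<n} - {e}))" by blast
  then have "fspan (v ` {..<n}) = fspan (v ` ({..<n} - {e}))"
    using fv.span_redundant[OF ve] by simp
  then have "fdim (v ` {..<n}) = fdim (v ` ({..<n} - {e}))"
    by (rule fv.span_eq_dim)
  also have "\<dots> \<le> card (v ` ({..<n} - {e}))" by (rule fv.dim_le_card') simp
  also have "\<dots> \<le> card ({..<n} - {e})" by (rule card_image_le) simp
  also have "\<dots> = n - 1" using e(1) by simp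
  finally have r: "fdim (v ` {..<n}) + 1 \<le> n" using assms(1) by simp
  have dpos: "1 \<le> d j" if j: "j < m" for j
  proof -
    have "x 0 j \<noteq> 0" using tensor_factor_nz[OF assms(3) j] assms(1) by simp
    moreover have "x 0 j \<in> (\<lambda>a. x a j) ` {..<n}" using assms(1) by simp
    ultimately show ?thesis using dim_pos[of "(\<lambda>a. x a j) ` {..<n}" "x 0 j"] assms(4)[OF j] by simp
  qed
  have "(\<Sum>j<m. d j - 1) + m = (\<Sum>j<m. d j - 1 + 1)" by (simp only: sum.distrib) simp
  also have "\<dots> = (\<Sum>j<m. d j)"
  proof (rule sum.cong)
    fix j assume "j \<in> {..<m}"
    then have "1 \<le> d j" using dpos by simp
    then show "d j - 1 + 1 = d j" by simp
  qed simp
  also have "\<dots> = (\<Sum>j<m. fdim ((\<lambda>a. x a j) ` {..<n}))" using assms(4) by (intro sum.cong) auto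
  finally have D: "(\<Sum>j<m. d j - 1) + m = (\<Sum>j<m. fdim ((\<lambda>a. x a j) ` {..<n}))" .
  show False using C r D assms(5) by linarith
qed

end
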